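(* For $1<r<\infty$, the function $G(z)=r\big(1-(1-\frac1z)^{1/r}\big)$ (principal power) is the Cauchy transform on $\mathbb{C}_+$ of the beta distribution $B(1-\frac1r,1+\frac1r)$: \[ \mu(dx)=\frac{r\sin(\pi/r)}{\pi}\,x^{-1/r}(1-x)^{1/r}\,dx,\qquad 0<x<1. \] That is, $\mu^{1}_{-1,r}=B(1-\frac1r,1+\frac1r)$.
   Context: $\mu^{1}_{-1,r}$ denotes the probability measure on $\mathbb{R}$ whose Cauchy transform $\int\frac{\mu(dx)}{z-x}$ on $\mathbb{C}_+$ equals $r\big(1-(1-\frac1z)^{1/r}\big)$, where $w^{1/r}$ is the principal power on $\mathbb{C}\setminus(-\infty,0]$ (this is the case $\alpha=1$, $s=-1$ of the family $G^\alpha_{s,r}(z)=-r^{1/\alpha}\big(\frac{1-(1-s(-1/z)^\alpha)^{1/r}}{s}\big)^{1/\alpha}$). *)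

theory Defs
  imports "HOL-Probability.Probability"
begin

definition beta_dens :: "real \<Rightarrow> real \<Rightarrow> real" where
  "beta_dens r x = (if 0 < x \<and> x < 1
     then r * sin (pi / r) / pi * x powr (- 1 / r) * (1 - x) powr (1 / r) else 0)"

definition beta_measure :: "real \<Rightarrow> real measure" where
  "beta_measure r = density lborel (\<lambda>x. ennreal (beta_dens r x))"

definition cauchy_transform :: "real measure \<Rightarrow> complex \<Rightarrow> complex" where
  "cauchy_transform M z = (\<integral>x. 1 / (z - complex_of_real x) \<partial>M)"

text \<open>G(z) = r (1 - (1 - 1/z)^(1/r)) with the principal power (complex powr uses principal Ln).\<close>
definition G_fun :: "real \<Rightarrow> complex \<Rightarrow> complex" where
  "G_fun r z = complex_of_real r * (1 - (1 - 1 / z) powr complex_of_real (1 / r))"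

end

theory Submission
  imports Defs
begin


lemma dens_alt:
  assumes "1 < r"
  shows "beta_dens r x = indicator {0..1} x * (r * sin (pi / r) / pi * (x powr (- (1/r)) * (1 - x) powr (1/r)))"
  using assms by (auto simp: beta_dens_def indicator_def)

lemma dens_nonneg:
  assumes "1 < r" shows "0 \<le> beta_dens r x"
proof -
  have "0 < pi / r" "pi / r < pi" using assms pi_gt_zero by (auto simp: field_simps)
  hence "sin (pi / r) > 0" by (intro sin_gt_zero) auto
  thus ?thesis using assms by (auto simp: beta_dens_def)
qed

lemma dens_meas: "beta_dens r \<in> borel_measurable borel"
  unfolding beta_dens_def by measurable

lemma dens_meas': "(\<lambda>x. ennreal (beta_dens r x)) \<in> borel_measurable borel"
  using dens_meas by measurable

lemma Beta_val:
  fixes a :: real assumes "0 < a" "a < 1"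
  shows "Beta (1 - a) (1 + a) = a * pi / sin (pi * a)"
proof -
  have g1: "Gamma (complex_of_real (1 - a)) = complex_of_real (Gamma (1 - a))"
    by (rule Gamma_complex_of_real)
  have "complex_of_real (Gamma a * Gamma (1 - a)) = Gamma (complex_of_real a) * Gamma (1 - complex_of_real a)"
    using g1 by (simp add: Gamma_complex_of_real)
  also have "\<dots> = of_real pi / sin (of_real pi * of_real a)"
    by (rule Gamma_reflection_complex)
  also have "sin (of_real pi * of_real a) = complex_of_real (sin (pi * a))"
    by (metis of_real_mult sin_of_real)
  finally have 1: "Gamma a * Gamma (1 - a) = pi / sin (pi * a)"
    by (metis of_real_divide of_real_eq_iff)
  have na: "a \<notin> \<int>\<^sub>\<le>\<^sub>0" using assms nonpos_Ints_nonpos by fastforce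
  have 2: "Gamma (1 + a) = a * Gamma a"
    using Gamma_plus1[OF na] by (simp add: add.commute)
  have 3: "Gamma (2::real) = 1"
    using Gamma_fact[of 1] by simp
  have "Beta (1 - a) (1 + a) = Gamma (1 - a) * Gamma (1 + a) / Gamma 2"
    by (simp add: Beta_def)
  thus ?thesis using 1 2 3 by (simp add: field_simps)
qed

lemma beta_prob:
  assumes "1 < r" shows "prob_space (beta_measure r)"
proof (rule prob_spaceI)
  define a where "a = 1 / r"
  have a: "0 < a" "a < 1" using assms by (auto simp: a_def)
  define c where "c = r * sin (pi / r) / pi"
  have sn: "sin (pi * a) > 0" using a by (intro sin_gt_zero) auto
  have c1: "c * Beta (1 - a) (1 + a) = 1"
    using Beta_val[OF a] sn assms unfolding c_def a_def by (simp add: field_simps)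
  have B: "((\<lambda>t. t powr (-a) * (1-t) powr a) has_integral Beta (1-a) (1+a)) {0..1}"
    using has_integral_Beta_real[of "1-a" "1+a"] a by simp
  have I: "((\<lambda>t. c * (t powr (-a) * (1-t) powr a)) has_integral 1) {0..1}"
    using has_integral_mult_right[OF B, of c] c1 by simp
  have "emeasure (beta_measure r) (space (beta_measure r)) = (\<integral>\<^sup>+ x. ennreal (beta_dens r x) \<partial>lborel)"
    unfolding beta_measure_def by (subst emeasure_density) (auto intro: dens_meas')
  also have "\<dots> = (\<integral>\<^sup>+ x. ennreal (indicator {0..1} x * (c * (x powr (-a) * (1-x) powr a))) \<partial>lborel)"
    using dens_alt[OF assms] unfolding c_def a_def by simp
  also have "\<dots> = 1"
  proof -
    have c0: "0 \<le> c" using sn a assms unfolding c_def a_def by (simp add: field_simps)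
    show ?thesis by (subst nn_integral_has_integral_lebesgue[OF _ I]) (auto intro!: mult_nonneg_nonneg c0)
  qed
  finally show "emeasure (beta_measure r) (space (beta_measure r)) = 1" .
qed


lemma norm_inv_bound:
  fixes z :: complex assumes "Im z > 0"
  shows "norm (1 / (z - complex_of_real x)) \<le> 1 / Im z"
proof -
  have "Im z \<le> norm (z - complex_of_real x)"
    using abs_Im_le_cmod[of "z - complex_of_real x"] assms by simp
  thus ?thesis using assms by (simp add: norm_divide frac_le)
qed

lemma meas_transfer:
  assumes "sets M = sets (borel :: real measure)" "f \<in> borel_measurable borel"
  shows "f \<in> borel_measurable M"
  using assms measurable_cong_sets[OF assms(1) refl] by simp

lemma int_bounded:
  fixes f :: "real \<Rightarrow> complex"
  assumes "prob_space M" "sets M = sets borel" "f \<in> borel_measurable borel" "\<And>x. norm (f x) \<le> B"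
  shows "integrable M f"
proof -
  interpret prob_space M by fact
  show ?thesis
    by (rule integrable_const_bound[where B=B]) (use assms meas_transfer in auto)
qed

lemma int_norm_le:
  fixes f :: "real \<Rightarrow> complex"
  assumes "prob_space M" "sets M = sets borel" "f \<in> borel_measurable borel" "\<And>x. norm (f x) \<le> B"
  shows "norm (integral\<^sup>L M f) \<le> B"
proof -
  interpret prob_space M by fact
  have i: "integrable M f" by (rule int_bounded[OF assms])
  have "norm (integral\<^sup>L M f) \<le> (\<integral>x. norm (f x) \<partial>M)" by (rule integral_norm_bound)
  also have "\<dots> \<le> B" by (rule integral_le_const) (use i assms in auto)
  finally show ?thesis .
qed

lemma cauchy_integrable:
  assumes "prob_space M" "sets M = sets borel" "Im z > 0"
  shows "integrable M (\<lambda>x. 1 / (z - complex_of_real x))"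
  by (rule int_bounded[OF assms(1,2) _ norm_inv_bound[OF assms(3)]]) measurable

lemma cauchy_integrable2:
  assumes "prob_space M" "sets M = sets borel" "Im z > 0"
  shows "integrable M (\<lambda>x. 1 / (z - complex_of_real x)^2)"
proof (rule int_bounded[OF assms(1,2), where B="(1/Im z)^2"])
  fix x
  show "norm (1 / (z - complex_of_real x)^2) \<le> (1/Im z)^2"
    using norm_inv_bound[OF assms(3), of x] 
    by (metis norm_ge_zero norm_power power_mono power_one_over)
qed measurable

lemma alg1:
  fixes u v :: complex assumes "u \<noteq> 0" "v \<noteq> 0" "u \<noteq> v"
  shows "(1 / u - 1 / v) / (u - v) + 1 / v ^ 2 = (u - v) / (u * v ^ 2)"
proof -
  have "u - v \<noteq> 0" using assms by simp
  thus ?thesis using assms by (simp add: field_simps power2_eq_square)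
qed

lemma cauchy_deriv:
  assumes P: "prob_space M" "sets M = sets borel" and z0: "Im z0 > 0"
  shows "((\<lambda>z. \<integral>x. 1 / (z - complex_of_real x) \<partial>M) has_field_derivative
           - (\<integral>x. 1 / (z0 - complex_of_real x)^2 \<partial>M)) (at z0)"
proof -
  define d where "d = Im z0"
  have d: "d > 0" using z0 by (simp add: d_def)
  define F where "F = (\<lambda>z. \<integral>x. 1 / (z - complex_of_real x) \<partial>M)"
  define D where "D = - (\<integral>x. 1 / (z0 - complex_of_real x)^2 \<partial>M)"
  have key: "norm ((F z - F z0) / (z - z0) - D) \<le> norm (z - z0) * (2 / d^3)"
    if zz: "z \<noteq> z0" "dist z z0 < d / 2" for z
  proof -
    have "\<bar>Im z - Im z0\<bar> \<le> norm (z - z0)" using abs_Im_le_cmod[of "z - z0"] by simp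
    hence Imz: "Im z > d / 2" using zz d by (simp add: d_def dist_norm)
    have z: "Im z > 0" using Imz d by simp
    have nz: "z - complex_of_real x \<noteq> 0" "z0 - complex_of_real x \<noteq> 0" for x
      using z z0 by (auto simp: complex_eq_iff)
    have i1: "integrable M (\<lambda>x. 1 / (z - complex_of_real x))"
      by (rule cauchy_integrable[OF P z])
    have i0: "integrable M (\<lambda>x. 1 / (z0 - complex_of_real x))"
      by (rule cauchy_integrable[OF P z0])
    have i2: "integrable M (\<lambda>x. 1 / (z0 - complex_of_real x)^2)"
      by (rule cauchy_integrable2[OF P z0])
    have "(F z - F z0) / (z - z0) - D =
          (\<integral>x. (1 / (z - complex_of_real x) - 1 / (z0 - complex_of_real x)) / (z - z0)
              + 1 / (z0 - complex_of_real x)^2 \<partial>M)"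
    proof -
      have id1: "integrable M (\<lambda>x. (1 / (z - complex_of_real x) - 1 / (z0 - complex_of_real x)) / (z - z0))"
        using i1 i0 by (intro integrable_divide Bochner_Integration.integrable_diff)
      have "(\<integral>x. (1 / (z - complex_of_real x) - 1 / (z0 - complex_of_real x)) / (z - z0)
              + 1 / (z0 - complex_of_real x)^2 \<partial>M) =
            (\<integral>x. (1 / (z - complex_of_real x) - 1 / (z0 - complex_of_real x)) / (z - z0) \<partial>M)
              + (\<integral>x. 1 / (z0 - complex_of_real x)^2 \<partial>M)"
        by (rule Bochner_Integration.integral_add[OF id1 i2])
      also have "(\<integral>x. (1 / (z - complex_of_real x) - 1 / (z0 - complex_of_real x)) / (z - z0) \<partial>M)
           = (F z - F z0) / (z - z0)"
        unfolding F_def integral_divide_zero Bochner_Integration.integral_diff[OF i1 i0] ..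
      finally show ?thesis unfolding D_def by simp
    qed
    also have "\<dots> = (\<integral>x. (z - z0) / ((z - complex_of_real x) * (z0 - complex_of_real x)^2) \<partial>M)"
    proof (rule Bochner_Integration.integral_cong[OF refl])
      fix x
      show "(1 / (z - complex_of_real x) - 1 / (z0 - complex_of_real x)) / (z - z0) +
            1 / (z0 - complex_of_real x)^2 = (z - z0) / ((z - complex_of_real x) * (z0 - complex_of_real x)^2)"
      proof -
        have "z - complex_of_real x \<noteq> z0 - complex_of_real x" using zz(1) by simp
        from alg1[OF nz[of x] this] show ?thesis by simp
      qed
    qed
    also have "norm \<dots> \<le> norm (z - z0) * (2 / d^3)"
    proof (rule int_norm_le[OF P])
      fix x
      have a: "norm (z - complex_of_real x) \<ge> d / 2"
        using abs_Im_le_cmod[of "z - complex_of_real x"] Imz by simp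
      have b: "norm (z0 - complex_of_real x) \<ge> d"
        using abs_Im_le_cmod[of "z0 - complex_of_real x"] by (simp add: d_def)
      have p: "0 < (d/2) * d^2" using d by simp
      have le: "(d/2) * d^2 \<le> norm (z - complex_of_real x) * norm (z0 - complex_of_real x)^2"
        using a b d by (intro mult_mono power_mono) auto
      have "0 < (norm (z - complex_of_real x) * norm (z0 - complex_of_real x)^2) * ((d/2) * d^2)"
        using mult_pos_pos[OF less_le_trans[OF p le] p] .
      with le have "norm (z - z0) / (norm (z - complex_of_real x) * norm (z0 - complex_of_real x)^2)
             \<le> norm (z - z0) / ((d/2) * d^2)"
        by (intro divide_left_mono) auto
      also have "\<dots> = norm (z - z0) * (2 / d^3)" by (simp add: power3_eq_cube power2_eq_square)
      finally show "norm ((z - z0) / ((z - complex_of_real x) * (z0 - complex_of_real x)^2))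
                    \<le> norm (z - z0) * (2 / d^3)"
        by (simp add: norm_divide norm_mult norm_power)
    qed measurable
    finally show ?thesis .
  qed
  have "((\<lambda>z. (F z - F z0) / (z - z0) - D) \<longlongrightarrow> 0) (at z0)"
  proof (rule Lim_null_comparison)
    show "\<forall>\<^sub>F z in at z0. norm ((F z - F z0) / (z - z0) - D) \<le> norm (z - z0) * (2 / d^3)"
      unfolding eventually_at using d key by (intro exI[of _ "d/2"]) auto
    have "((\<lambda>z. norm (z - z0) * (2 / d^3)) \<longlongrightarrow> norm (z0 - z0) * (2 / d^3)) (at z0)"
      by (intro tendsto_intros)
    thus "((\<lambda>z. norm (z - z0) * (2 / d^3)) \<longlongrightarrow> 0) (at z0)" by simp
  qed
  hence "((\<lambda>z. (F z - F z0) / (z - z0)) \<longlongrightarrow> D) (at z0)"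
    by (subst Lim_null) assumption
  thus ?thesis unfolding F_def D_def has_field_derivative_iff by simp
qed


lemma alg3:
  fixes u :: complex and K x a :: real
  assumes "u \<noteq> 0"
  shows "complex_of_real (K*x*(1-x)) * (-1/u^2) + complex_of_real (K*((1-a)*(1-x) - (1+a)*x)) * (-1/u)
       = complex_of_real K * ((2*complex_of_real x - 1 + complex_of_real a)/u + complex_of_real x*(complex_of_real x - 1)/u^2)"
  using assms by (simp add: field_simps power2_eq_square)

lemma ftc_zero:
  fixes z :: complex and a c :: real
  assumes z: "Im z > 0" and a: "0 < a" "a < 1"
  shows "((\<lambda>x. (c * (x powr (-a) * (1-x) powr a)) *\<^sub>R
            ((2*complex_of_real x - 1 + complex_of_real a)/(z - complex_of_real x)
              + complex_of_real x * (complex_of_real x - 1)/(z - complex_of_real x)^2))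
          has_integral 0) {0..1}"
proof -
  define P where "P = (\<lambda>x::real. c * x powr (1-a) * (1-x) powr (1+a))"
  define R where "R = (\<lambda>x::real. -1/(z - complex_of_real x))"
  have nz: "z - complex_of_real x \<noteq> 0" for x using z by (auto simp: complex_eq_iff)
  have cont: "continuous_on {0..1} (\<lambda>x. P x *\<^sub>R R x)"
  proof -
    have c1: "continuous_on {0..1} (\<lambda>x::real. x powr (1-a))"
      by (rule continuous_on_powr') (use a in \<open>auto intro: continuous_intros\<close>)
    have c2: "continuous_on {0..1} (\<lambda>x::real. (1-x) powr (1+a))"
      by (rule continuous_on_powr') (use a in \<open>auto intro: continuous_intros\<close>)
    have c3: "continuous_on {0..1} R"
      unfolding R_def using nz by (auto intro!: continuous_intros)
    show ?thesis unfolding P_def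
      by (intro continuous_intros c1 c2 c3)
  qed
  have der: "((\<lambda>x. P x *\<^sub>R R x) has_vector_derivative
            ((c * (x powr (-a) * (1-x) powr a)) *\<^sub>R
            ((2*complex_of_real x - 1 + complex_of_real a)/(z - complex_of_real x)
              + complex_of_real x * (complex_of_real x - 1)/(z - complex_of_real x)^2))) (at x)"
    if x: "x \<in> {0<..<1}" for x
  proof -
    have x0: "0 < x" "x < 1" using x by auto
    have d1: "((\<lambda>x. x powr (1-a)) has_real_derivative (1-a) * x powr (-a)) (at x)"
      using has_real_derivative_powr[OF x0(1), of "1-a"] by simp
    have d2': "((\<lambda>x. 1 - x) has_real_derivative -1) (at x)"
      by (auto intro!: derivative_eq_intros)
    have d2: "((\<lambda>x. (1-x) powr (1+a)) has_real_derivative (1+a) * (1-x) powr a * (-1)) (at x)"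
      using DERIV_chain2[OF has_real_derivative_powr[of "1-x" "1+a"] d2'] x0 by simp
    have dP: "(P has_real_derivative c * ((1-a) * x powr (-a)) * (1-x) powr (1+a)
                + (1+a) * (1-x) powr a * (-1) * (c * x powr (1-a))) (at x)"
      unfolding P_def using DERIV_mult[OF DERIV_cmult[OF d1, of c] d2] by simp
    have fR: "((\<lambda>w. -1/(z - w)) has_field_derivative (-1/(z - complex_of_real x)^2)) (at (complex_of_real x))"
      using nz[of x] by (auto intro!: derivative_eq_intros simp: field_simps power2_eq_square)
    have dR: "(R has_vector_derivative (-1/(z - complex_of_real x)^2)) (at x)"
      unfolding R_def by (rule has_vector_derivative_real_field[OF fR])
    have D: "((\<lambda>x. P x *\<^sub>R R x) has_vector_derivative
        (P x *\<^sub>R (-1/(z - complex_of_real x)^2) +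
         (c * ((1-a) * x powr (-a)) * (1-x) powr (1+a) + (1+a) * (1-x) powr a * (-1) * (c * x powr (1-a))) *\<^sub>R R x)) (at x)"
      by (rule has_vector_derivative_scaleR[OF dP dR])
    define X where "X = x powr (-a)"
    define Y where "Y = (1-x) powr a"
    have e1: "x powr (1-a) = x * X" unfolding X_def using powr_add[of x 1 "-a"] x0 by simp
    have e2: "(1-x) powr (1+a) = (1-x) * Y" unfolding Y_def using powr_add[of "1-x" 1 a] x0 by simp
    have "P x *\<^sub>R (-1/(z - complex_of_real x)^2) +
         (c * ((1-a) * x powr (-a)) * (1-x) powr (1+a) + (1+a) * (1-x) powr a * (-1) * (c * x powr (1-a))) *\<^sub>R R x
        = complex_of_real ((c*X*Y)*x*(1-x)) * (-1/(z - complex_of_real x)^2)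
          + complex_of_real ((c*X*Y)*((1-a)*(1-x) - (1+a)*x)) * (-1/(z - complex_of_real x))"
      unfolding P_def R_def e1 e2 scaleR_conv_of_real
      by (simp add: X_def[symmetric] Y_def[symmetric] algebra_simps)
    also have "\<dots> = complex_of_real (c*X*Y) * ((2*complex_of_real x - 1 + complex_of_real a)/(z - complex_of_real x)
              + complex_of_real x * (complex_of_real x - 1)/(z - complex_of_real x)^2)"
      by (rule alg3[OF nz])
    finally show ?thesis using D unfolding X_def Y_def scaleR_conv_of_real by (simp add: mult_ac)
  qed
  have "((\<lambda>x. (c * (x powr (-a) * (1-x) powr a)) *\<^sub>R
            ((2*complex_of_real x - 1 + complex_of_real a)/(z - complex_of_real x)
              + complex_of_real x * (complex_of_real x - 1)/(z - complex_of_real x)^2))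
          has_integral (P 1 *\<^sub>R R 1 - P 0 *\<^sub>R R 0)) {0..1}"
    by (rule fundamental_theorem_of_calculus_interior[OF _ cont der]) auto
  moreover have "P 1 = 0" "P 0 = 0" using a unfolding P_def by auto
  ultimately show ?thesis by simp
qed


lemma alg4:
  fixes z x a :: complex assumes "z - x \<noteq> 0"
  shows "z*(z-1)/(z-x)^2 - 1 + a/(z-x) = (2*x - 1 + a)/(z-x) + x*(x-1)/(z-x)^2"
proof -
  have e: "z*(z-1) = (z-x)^2 + (2*x-1)*(z-x) + x*(x-1)" by algebra
  have "z*(z-1)/(z-x)^2 = 1 + (2*x-1)/(z-x) + x*(x-1)/(z-x)^2"
    unfolding e using assms by (simp add: add_divide_distrib power2_eq_square)
  thus ?thesis by (simp add: add_divide_distrib diff_divide_distrib algebra_simps)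
qed

lemma sets_beta: "sets (beta_measure r) = sets borel"
  by (simp add: beta_measure_def)

lemma keyid:
  assumes r: "1 < r" and z: "Im z > 0"
  shows "z*(z-1) * (\<integral>x. 1/(z - complex_of_real x)^2 \<partial>beta_measure r)
           = 1 - complex_of_real (1/r) * (\<integral>x. 1/(z - complex_of_real x) \<partial>beta_measure r)"
proof -
  define M where "M = beta_measure r"
  define a where "a = 1/r"
  have a: "0 < a" "a < 1" using r by (auto simp: a_def)
  have P: "prob_space M" unfolding M_def by (rule beta_prob[OF r])
  have SM: "sets M = sets borel" unfolding M_def by (rule sets_beta)
  interpret prob_space M by (rule P)
  have nz: "z - complex_of_real x \<noteq> 0" for x using z by (auto simp: complex_eq_iff)
  define \<phi> where "\<phi> = (\<lambda>x::real. z*(z-1)/(z - complex_of_real x)^2 - 1 + complex_of_real a/(z - complex_of_real x))"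
  have i1: "integrable M (\<lambda>x. 1 / (z - complex_of_real x))" by (rule cauchy_integrable[OF P SM z])
  have i2: "integrable M (\<lambda>x. 1 / (z - complex_of_real x)^2)" by (rule cauchy_integrable2[OF P SM z])
  have i2': "integrable M (\<lambda>x. z*(z-1)/(z - complex_of_real x)^2)"
    using integrable_mult_right[OF i2, of "z*(z-1)"] by simp
  have i1': "integrable M (\<lambda>x. complex_of_real a/(z - complex_of_real x))"
    using integrable_mult_right[OF i1, of "complex_of_real a"] by simp
  have iphi: "integrable M \<phi>"
    unfolding \<phi>_def by (intro Bochner_Integration.integrable_add Bochner_Integration.integrable_diff i2' i1') auto
  have "integral\<^sup>L M \<phi> = z*(z-1) * (\<integral>x. 1/(z - complex_of_real x)^2 \<partial>M) - 1
         + complex_of_real a * (\<integral>x. 1/(z - complex_of_real x) \<partial>M)"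
  proof -
    have "integral\<^sup>L M \<phi> = (\<integral>x. z*(z-1)/(z - complex_of_real x)^2 - 1 \<partial>M)
            + (\<integral>x. complex_of_real a/(z - complex_of_real x) \<partial>M)"
      unfolding \<phi>_def
      by (rule Bochner_Integration.integral_add[OF Bochner_Integration.integrable_diff[OF i2'] i1']) auto
    also have "(\<integral>x. z*(z-1)/(z - complex_of_real x)^2 - 1 \<partial>M)
          = (\<integral>x. z*(z-1)/(z - complex_of_real x)^2 \<partial>M) - (\<integral>x. 1 \<partial>M)"
      by (rule Bochner_Integration.integral_diff[OF i2']) auto
    also have "(\<integral>x. (1::complex) \<partial>M) = 1" by (simp add: prob_space)
    also have "(\<integral>x. z*(z-1)/(z - complex_of_real x)^2 \<partial>M) = z*(z-1) * (\<integral>x. 1/(z - complex_of_real x)^2 \<partial>M)"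
      using integral_mult_right_zero[of M "z*(z-1)" "\<lambda>x. 1/(z - complex_of_real x)^2"] by simp
    also have "(\<integral>x. complex_of_real a/(z - complex_of_real x) \<partial>M) = complex_of_real a * (\<integral>x. 1/(z - complex_of_real x) \<partial>M)"
      using integral_mult_right_zero[of M "complex_of_real a" "\<lambda>x. 1/(z - complex_of_real x)"] by simp
    finally show ?thesis .
  qed
  moreover have "integral\<^sup>L M \<phi> = 0"
  proof -
    define c where "c = r * sin (pi / r) / pi"
    define g where "g = (\<lambda>x. (c * (x powr (-a) * (1-x) powr a)) *\<^sub>R
            ((2*complex_of_real x - 1 + complex_of_real a)/(z - complex_of_real x)
              + complex_of_real x * (complex_of_real x - 1)/(z - complex_of_real x)^2))"
    have gi: "(g has_integral 0) {0..1}" unfolding g_def by (rule ftc_zero[OF z a])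
    have mphi: "\<phi> \<in> borel_measurable borel" unfolding \<phi>_def by measurable
    have pw: "beta_dens r x *\<^sub>R \<phi> x = indicator {0..1} x *\<^sub>R g x" for x
    proof (cases "x \<in> {0..1}")
      case True
      have "\<phi> x = (2*complex_of_real x - 1 + complex_of_real a)/(z - complex_of_real x)
              + complex_of_real x * (complex_of_real x - 1)/(z - complex_of_real x)^2"
        unfolding \<phi>_def by (rule alg4[OF nz])
      thus ?thesis using True unfolding g_def dens_alt[OF r] c_def a_def by simp
    next
      case False
      thus ?thesis unfolding dens_alt[OF r] by simp
    qed
    have "integral\<^sup>L M \<phi> = (\<integral>x. beta_dens r x *\<^sub>R \<phi> x \<partial>lborel)"
      unfolding M_def beta_measure_def
      by (rule integral_density) (use mphi dens_meas dens_nonneg[OF r] in auto)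
    also have "\<dots> = (\<integral>x. indicator {0..1} x *\<^sub>R g x \<partial>lborel)" by (simp add: pw)
    finally have e: "integral\<^sup>L M \<phi> = set_lebesgue_integral lborel {0..1} g"
      by (simp add: set_lebesgue_integral_def)
    have "integrable lborel (\<lambda>x. beta_dens r x *\<^sub>R \<phi> x)"
      using iphi unfolding M_def beta_measure_def
      by (subst (asm) integrable_density) (use mphi dens_meas dens_nonneg[OF r] in auto)
    hence si: "set_integrable lborel {0..1} g"
      unfolding set_integrable_def by (simp add: pw)
    have "set_lebesgue_integral lborel {0..1} g = integral {0..1} g"
      by (rule set_borel_integral_eq_integral(2)[OF si])
    also have "\<dots> = 0" using gi by (rule integral_unique)
    finally show ?thesis using e by simp
  qed
  ultimately show ?thesis unfolding M_def a_def by (simp add: algebra_simps)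
qed


lemma Im_pos_1: "Im z > 0 \<Longrightarrow> Im (1 - 1/z) > 0"
  by (simp add: Im_divide power2_eq_square divide_pos_pos add_pos_nonneg sum_squares_gt_zero_iff complex_eq_iff)

lemma notin_npr: "Im z > 0 \<Longrightarrow> 1 - 1/z \<notin> \<real>\<^sub>\<le>\<^sub>0"
  using Im_pos_1[of z] by (auto simp: complex_nonpos_Reals_iff)

lemma alg5:
  fixes E A R F D :: complex assumes "D \<noteq> 0"
  shows "(0 - - ((1 - A * F) / D)) * E + E * (- A * (1/D)) * (R - F) = E / D * ((1 - A * F) - (A * R - A * F))"
  using assms by (simp add: field_simps)

theorem mainTheorem14:
  fixes r :: real
  assumes "1 < r"
  shows "prob_space (beta_measure r) \<and>
    (\<forall>z. Im z > 0 \<longrightarrow>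
       integrable (beta_measure r) (\<lambda>x. 1 / (z - complex_of_real x)) \<and>
       cauchy_transform (beta_measure r) z = G_fun r z)"
proof -
  define M where "M = beta_measure r"
  define a where "a = 1/r"
  have r: "1 < r" by fact
  have P: "prob_space M" unfolding M_def by (rule beta_prob[OF r])
  have SM: "sets M = sets borel" unfolding M_def by (rule sets_beta)
  define F where "F = (\<lambda>z. \<integral>x. 1/(z - complex_of_real x) \<partial>M)"
  define Q where "Q = (\<lambda>z. \<integral>x. 1/(z - complex_of_real x)^2 \<partial>M)"
  define L where "L = (\<lambda>z. Ln (1 - 1/z))"
  define K where "K = (\<lambda>z. (complex_of_real r - F z) * exp (- complex_of_real a * L z))"
  define S where "S = {z. 0 < Im z}"
  have ar: "complex_of_real a * complex_of_real r = 1" using r unfolding a_def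
    by (simp flip: of_real_mult)
  have dK: "(K has_field_derivative 0) (at z)" if z: "Im z > 0" for z
  proof -
    have z0: "z \<noteq> 0" "z - 1 \<noteq> 0" using z by (auto simp: complex_eq_iff)
    have dF: "(F has_field_derivative - Q z) (at z)"
      unfolding F_def Q_def by (rule cauchy_deriv[OF P SM z])
    have d1: "((\<lambda>z. 1 - 1/z) has_field_derivative 1/z^2) (at z)"
      using z0 by (auto intro!: derivative_eq_intros simp: field_simps power2_eq_square)
    have dL: "(L has_field_derivative inverse (1 - 1/z) * (1/z^2)) (at z)"
      unfolding L_def by (rule DERIV_chain2[OF has_field_derivative_Ln[OF notin_npr[OF z]] d1])
    have dE: "((\<lambda>z. exp (- complex_of_real a * L z)) has_field_derivative
               exp (- complex_of_real a * L z) * (- complex_of_real a * (inverse (1 - 1/z) * (1/z^2)))) (at z)"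
      by (rule DERIV_chain2[OF DERIV_exp DERIV_cmult[OF dL]])
    have dK': "(K has_field_derivative (0 - - Q z) * exp (- complex_of_real a * L z)
        + exp (- complex_of_real a * L z) * (- complex_of_real a * (inverse (1 - 1/z) * (1/z^2))) * (complex_of_real r - F z)) (at z)"
      unfolding K_def by (rule DERIV_mult[OF DERIV_diff[OF DERIV_const dF] dE])
    have inv: "inverse (1 - 1/z) * (1/z^2) = 1/(z*(z-1))"
      using z0 by (simp add: field_simps power2_eq_square)
    have kid: "z*(z-1) * Q z = 1 - complex_of_real a * F z"
      unfolding Q_def F_def M_def a_def by (rule keyid[OF r z])
    have Qeq: "Q z = (1 - complex_of_real a * F z) / (z*(z-1))"
      using kid z0 by (simp add: field_simps)
    have "(0 - - Q z) * exp (- complex_of_real a * L z)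
        + exp (- complex_of_real a * L z) * (- complex_of_real a * (inverse (1 - 1/z) * (1/z^2))) * (complex_of_real r - F z)
        = exp (- complex_of_real a * L z) / (z*(z-1)) * ((1 - complex_of_real a * F z)
            - (complex_of_real a * complex_of_real r - complex_of_real a * F z))"
      unfolding inv Qeq by (rule alg5) (use z0 in simp)
    also have "\<dots> = 0" using ar by simp
    finally show ?thesis using dK' by simp
  qed
  obtain k where k: "\<And>z. z \<in> S \<Longrightarrow> K z = k"
    using has_field_derivative_zero_constant[of S K] convex_halfspace_Im_gt[of 0] dK
    unfolding S_def by (metis has_field_derivative_at_within mem_Collect_eq)
  have kr: "k = complex_of_real r"
  proof -
    define w where "w = (\<lambda>y::real. \<i> * complex_of_real y)"
    have Imw: "Im (w y) = y" for y by (simp add: w_def)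
    have ev: "\<forall>\<^sub>F y in at_top. K (w y) = k"
      using eventually_gt_at_top[of 0] by eventually_elim (use k Imw in \<open>auto simp: S_def\<close>)
    have lim0: "((\<lambda>y. inverse y) \<longlongrightarrow> (0::real)) at_top"
      by (rule tendsto_inverse_0_at_top[OF filterlim_ident])
    have limF: "((\<lambda>y. F (w y)) \<longlongrightarrow> 0) at_top"
    proof (rule Lim_null_comparison[OF _ lim0])
      show "\<forall>\<^sub>F y in at_top. norm (F (w y)) \<le> inverse y"
        using eventually_gt_at_top[of 0]
      proof eventually_elim
        case (elim y)
        have "norm (F (w y)) \<le> 1 / Im (w y)"
          unfolding F_def
          by (rule int_norm_le[OF P SM _ norm_inv_bound]) (use elim Imw in auto)
        thus ?case using Imw by (simp add: divide_inverse)
      qed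
    qed
    have limi: "((\<lambda>y. 1 / w y) \<longlongrightarrow> 0) at_top"
    proof (rule Lim_null_comparison[OF _ lim0])
      show "\<forall>\<^sub>F y in at_top. norm (1 / w y) \<le> inverse y"
        using eventually_gt_at_top[of 0]
        by eventually_elim (simp add: w_def norm_divide norm_mult divide_inverse norm_inverse)
    qed
    have "((\<lambda>y. 1 - 1 / w y) \<longlongrightarrow> 1 - 0) at_top" by (intro tendsto_intros limi)
    hence l1: "((\<lambda>y. 1 - 1 / w y) \<longlongrightarrow> 1) at_top" by simp
    have cLn: "isCont Ln 1"
      by (rule DERIV_isCont[OF has_field_derivative_Ln]) (simp add: complex_nonpos_Reals_iff)
    have limL: "((\<lambda>y. L (w y)) \<longlongrightarrow> Ln 1) at_top"
      unfolding L_def by (rule isCont_tendsto_compose[OF cLn l1])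
    have "((\<lambda>y. K (w y)) \<longlongrightarrow> (complex_of_real r - 0) * exp (- complex_of_real a * Ln 1)) at_top"
      unfolding K_def by (intro tendsto_intros limF limL)
    hence lr: "((\<lambda>y. K (w y)) \<longlongrightarrow> complex_of_real r) at_top" by simp
    have t2: "((\<lambda>y. K (w y)) \<longlongrightarrow> k) at_top" using ev by (rule tendsto_eventually)
    show ?thesis using tendsto_unique[OF _ t2 lr] by simp
  qed
  show ?thesis
  proof (intro conjI allI impI)
    show "prob_space (beta_measure r)" using P by (simp add: M_def)
  next
    fix z :: complex assume z: "Im z > 0"
    show "integrable (beta_measure r) (\<lambda>x. 1 / (z - complex_of_real x))"
      using cauchy_integrable[OF P SM z] by (simp add: M_def)
    have nz: "1 - 1/z \<noteq> 0" using Im_pos_1[OF z] by auto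
    have Kz: "K z = complex_of_real r" using k[of z] kr z by (simp add: S_def)
    have "complex_of_real r - F z = complex_of_real r * exp (complex_of_real a * L z)"
    proof -
      have e: "exp (- complex_of_real a * L z) * exp (complex_of_real a * L z) = 1"
        by (metis exp_minus_inverse mult.commute mult_minus_left)
      have "(complex_of_real r - F z) = K z * exp (complex_of_real a * L z)"
        unfolding K_def by (simp only: mult.assoc e mult_1_right)
      thus ?thesis using Kz by simp
    qed
    hence "F z = complex_of_real r * (1 - exp (complex_of_real a * L z))"
      by (simp add: algebra_simps)
    also have "exp (complex_of_real a * L z) = (1 - 1/z) powr complex_of_real (1/r)"
      using nz unfolding L_def a_def by (simp add: powr_def)
    finally show "cauchy_transform (beta_measure r) z = G_fun r z"
      unfolding cauchy_transform_def G_fun_def F_def M_def .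
  qed
qed
end
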